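(* Let $\mathbb{M}(\mathbb{B})=\{F_A:A\in\mathrm{Sp}(1,1)\}$ be the set of classical Möbius transformations of $\mathbb{B}$ and $\mathcal{M}(\mathbb{B})=\{\mathcal{F}_A:A\in\mathrm{Sp}(1,1)\}$ the set of regular Möbius transformations of $\mathbb{B}$. Then $\mathbb{M}(\mathbb{B})\cap\mathcal{M}(\mathbb{B})$ consists exactly of the transformations $F_{a,u}:\mathbb{B}\to\mathbb{B}$, \[ F_{a,u}(q)=(1-qa)^{-1}(q-a)u, \] where $a\in(-1,1)$ and $u\in\mathrm{Sp}(1)$.
   Context: $\mathbb{H}$ denotes the quaternions, $\mathbb{B}=\{q\in\mathbb{H}:|q|<1\}$, $\mathrm{Sp}(1)=\{u\in\mathbb{H}:|u|=1\}$. Let $I_{1,1}=\operatorname{diag}(1,-1)$ and $\mathrm{Sp}(1,1)=\{A\in M_2(\mathbb{H}):A^*I_{1,1}A=I_{1,1}\}$. For $A=\begin{pmatrix}a&c\\ b&d\end{pmatrix}\in\mathrm{Sp}(1,1)$, the classical Möbius transformation is $F_A(q)=(qc+d)^{-1}(qa+b)$. Slice regular functions on $\mathbb{B}$ are exactly the functions $f(q)=\sum_{n\ge0}q^na_n$ ($a_n\in\mathbb{H}$) with the series converging on $\mathbb{B}$. The $*$-product is $(\sum q^na_n)*(\sum q^nb_n)=\sum_n q^n\sum_{k=0}^n a_kb_{n-k}$; $f^c(q)=\sum q^n\overline{a_n}$, $f^s=f*f^c$, $f^{-*}=(f^s)^{-1}f^c$ (pointwise, off the zero set of $f^s$). For $a,b\in\mathbb{H}$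 let $\ell_{a,b}(q)=qa+b$. For $A=\begin{pmatrix}a&c\\ b&d\end{pmatrix}\in\mathrm{Sp}(1,1)$, the regular Möbius transformation is $\mathcal{F}_A=\ell_{c,d}^{-*}*\ell_{a,b}$, which maps $\mathbb{B}$ diffeomorphically onto $\mathbb{B}$. *)

theory Defs
  imports "HOL-Analysis.Analysis"
begin

datatype quat = Quat (Re: real) (Im1: real) (Im2: real) (Im3: real)

lemma quat_eq_iff: "x = y \<longleftrightarrow> Re x = Re y \<and> Im1 x = Im1 y \<and> Im2 x = Im2 y \<and> Im3 x = Im3 y"
  by (cases x; cases y) auto

lemma quat_eqI: "Re x = Re y \<Longrightarrow> Im1 x = Im1 y \<Longrightarrow> Im2 x = Im2 y \<Longrightarrow> Im3 x = Im3 y \<Longrightarrow> x = y"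
  by (simp add: quat_eq_iff)

instantiation quat :: ab_group_add
begin
definition "0 = Quat 0 0 0 0"
definition "x + y = Quat (Re x + Re y) (Im1 x + Im1 y) (Im2 x + Im2 y) (Im3 x + Im3 y)"
definition "- x = Quat (- Re x) (- Im1 x) (- Im2 x) (- Im3 x)"
definition "x - y = Quat (Re x - Re y) (Im1 x - Im1 y) (Im2 x - Im2 y) (Im3 x - Im3 y)"
instance by standard (auto simp: zero_quat_def plus_quat_def uminus_quat_def minus_quat_def quat_eq_iff)
end

lemma quat_add_simps [simp]:
  "Re 0 = 0" "Im1 0 = 0" "Im2 0 = 0" "Im3 0 = 0"
  "Re (x + y) = Re x + Re y" "Im1 (x + y) = Im1 x + Im1 y" "Im2 (x + y) = Im2 x + Im2 y" "Im3 (x + y) = Im3 x + Im3 y"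
  "Re (- x) = - Re x" "Im1 (- x) = - Im1 x" "Im2 (- x) = - Im2 x" "Im3 (- x) = - Im3 x"
  "Re (x - y) = Re x - Re y" "Im1 (x - y) = Im1 x - Im1 y" "Im2 (x - y) = Im2 x - Im2 y" "Im3 (x - y) = Im3 x - Im3 y"
  by (simp_all add: zero_quat_def plus_quat_def uminus_quat_def minus_quat_def)

instantiation quat :: real_vector
begin
definition "scaleR r x = Quat (r * Re x) (r * Im1 x) (r * Im2 x) (r * Im3 x)"
instance by standard (auto simp: scaleR_quat_def quat_eq_iff algebra_simps)
end

lemma quat_scaleR_simps [simp]:
  "Re (r *\<^sub>R x) = r * Re x" "Im1 (r *\<^sub>R x) = r * Im1 x"
  "Im2 (r *\<^sub>R x) = r * Im2 x" "Im3 (r *\<^sub>R x) = r * Im3 x"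
  by (simp_all add: scaleR_quat_def)

instantiation quat :: "{ring_1, inverse}"
begin
definition "1 = Quat 1 0 0 0"
definition "x * y = Quat
   (Re x * Re y - Im1 x * Im1 y - Im2 x * Im2 y - Im3 x * Im3 y)
   (Re x * Im1 y + Im1 x * Re y + Im2 x * Im3 y - Im3 x * Im2 y)
   (Re x * Im2 y - Im1 x * Im3 y + Im2 x * Re y + Im3 x * Im1 y)
   (Re x * Im3 y + Im1 x * Im2 y - Im2 x * Im1 y + Im3 x * Re y)"
definition "inverse x = (let n = (Re x)\<^sup>2 + (Im1 x)\<^sup>2 + (Im2 x)\<^sup>2 + (Im3 x)\<^sup>2 in
   Quat (Re x / n) (- Im1 x / n) (- Im2 x / n) (- Im3 x / n))"
definition "divide x y = x * inverse (y :: quat)"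
instance by standard (auto simp: one_quat_def times_quat_def quat_eq_iff algebra_simps)
end

lemma quat_mult_simps [simp]:
  "Re 1 = 1" "Im1 1 = 0" "Im2 1 = 0" "Im3 1 = 0"
  "Re (x * y) = Re x * Re y - Im1 x * Im1 y - Im2 x * Im2 y - Im3 x * Im3 y"
  "Im1 (x * y) = Re x * Im1 y + Im1 x * Re y + Im2 x * Im3 y - Im3 x * Im2 y"
  "Im2 (x * y) = Re x * Im2 y - Im1 x * Im3 y + Im2 x * Re y + Im3 x * Im1 y"
  "Im3 (x * y) = Re x * Im3 y + Im1 x * Im2 y - Im2 x * Im1 y + Im3 x * Re y"
  by (simp_all add: one_quat_def times_quat_def)

lemma quat_sumsq_pos: "x \<noteq> 0 \<Longrightarrow> (Re x)\<^sup>2 + (Im1 x)\<^sup>2 + (Im2 x)\<^sup>2 + (Im3 x)\<^sup>2 > 0"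
proof (cases x)
  case (Quat a b c d)
  assume "x \<noteq> 0"
  then have "a \<noteq> 0 \<or> b \<noteq> 0 \<or> c \<noteq> 0 \<or> d \<noteq> 0" using Quat by (auto simp: zero_quat_def)
  then show ?thesis using Quat
    by (smt (verit) quat.sel zero_le_power2 zero_less_power2)
qed

instance quat :: division_ring
proof
  fix x :: quat
  assume x: "x \<noteq> 0"
  define n where "n = (Re x)\<^sup>2 + (Im1 x)\<^sup>2 + (Im2 x)\<^sup>2 + (Im3 x)\<^sup>2"
  have n: "n \<noteq> 0" using quat_sumsq_pos[OF x] unfolding n_def by simp
  have e: "Re x * Re x + Im1 x * Im1 x + Im2 x * Im2 x + Im3 x * Im3 x = n"
    by (simp add: n_def power2_eq_square)
  show "inverse x * x = 1" "x * inverse x = 1"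
    using n e by (auto simp: quat_eq_iff inverse_quat_def Let_def n_def[symmetric] diff_divide_distrib[symmetric]
       add_divide_distrib[symmetric] algebra_simps power2_eq_square)
next
  show "inverse (0::quat) = 0" by (simp add: inverse_quat_def quat_eq_iff)
qed (simp add: divide_quat_def)

instantiation quat :: real_inner
begin
definition "inner x y = Re x * Re y + Im1 x * Im1 y + Im2 x * Im2 y + Im3 x * Im3 y"
definition "norm x = sqrt (inner x (x::quat))"
definition "sgn x = x /\<^sub>R norm (x::quat)"
definition "dist x y = norm (x - y :: quat)"
definition "(uniformity :: (quat \<times> quat) filter) = (INF e\<in>{0<..}. principal {(x, y). dist x y < e})"
definition "open (U :: quat set) \<longleftrightarrow> (\<forall>x\<in>U. eventually (\<lambda>(x', y). x' = x \<longrightarrow> y \<in> U) uniformity)"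
instance
proof
  fix x y z :: quat and r :: real
  show "inner x y = inner y x" by (simp add: inner_quat_def algebra_simps)
  show "inner (x + y) z = inner x z + inner y z" by (simp add: inner_quat_def algebra_simps)
  show "inner (r *\<^sub>R x) y = r * inner x y" by (simp add: inner_quat_def algebra_simps)
  show "0 \<le> inner x x" by (simp add: inner_quat_def)
  show "inner x x = 0 \<longleftrightarrow> x = 0"
  proof
    assume "inner x x = 0"
    then show "x = 0"
      using quat_sumsq_pos[of x] by (cases "x = 0") (auto simp: inner_quat_def power2_eq_square)
  qed (simp add: inner_quat_def)
qed (simp_all add: norm_quat_def sgn_quat_def dist_quat_def uniformity_quat_def open_quat_def)
end

lemma norm_quat_eq: "norm x = sqrt ((Re x)\<^sup>2 + (Im1 x)\<^sup>2 + (Im2 x)\<^sup>2 + (Im3 x)\<^sup>2)"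
  by (simp add: norm_quat_def inner_quat_def power2_eq_square)

instance quat :: real_normed_div_algebra
proof (standard)
  fix x y :: quat and a :: real
  show "norm (x * y) = norm x * norm y"
    by (simp add: norm_quat_eq real_sqrt_mult[symmetric]) (simp add: power2_eq_square algebra_simps)
  show "a *\<^sub>R x * y = a *\<^sub>R (x * y)" by (simp add: quat_eq_iff algebra_simps)
  show "x * a *\<^sub>R y = a *\<^sub>R (x * y)" by (simp add: quat_eq_iff algebra_simps)
qed

definition cnj :: "quat \<Rightarrow> quat" where
  "cnj x = Quat (Re x) (- Im1 x) (- Im2 x) (- Im3 x)"

abbreviation qball :: "quat set" where "qball \<equiv> ball 0 1"

text \<open>A quaternionic 2x2 matrix A = [[a, c], [b, d]] is encoded by its entries (a, b, c, d).
  A lies in Sp(1,1) iff A^* I_{1,1} A = I_{1,1}, where A^* = [[cnj a, cnj b], [cnj c, cnj d]]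
  and I_{1,1} A = [[a, c], [-b, -d]]; written out entrywise:\<close>
definition sp11 :: "quat \<Rightarrow> quat \<Rightarrow> quat \<Rightarrow> quat \<Rightarrow> bool" where
  "sp11 a b c d \<longleftrightarrow>
     cnj a * a + cnj b * (- b) = 1 \<and> cnj a * c + cnj b * (- d) = 0 \<and>
     cnj c * a + cnj d * (- b) = 0 \<and> cnj c * c + cnj d * (- d) = - 1"

definition mobius :: "quat \<Rightarrow> quat \<Rightarrow> quat \<Rightarrow> quat \<Rightarrow> quat \<Rightarrow> quat" where
  "mobius a b c d q = inverse (q * c + d) * (q * a + b)"

definition slice_regular :: "(quat \<Rightarrow> quat) \<Rightarrow> bool" where
  "slice_regular f \<longleftrightarrow> (\<exists>a. \<forall>q\<in>qball. (\<lambda>n. q ^ n * a n) sums f q)"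

definition scoeff :: "(quat \<Rightarrow> quat) \<Rightarrow> nat \<Rightarrow> quat" where
  "scoeff f = (SOME a. \<forall>q\<in>qball. (\<lambda>n. q ^ n * a n) sums f q)"

definition star :: "(quat \<Rightarrow> quat) \<Rightarrow> (quat \<Rightarrow> quat) \<Rightarrow> quat \<Rightarrow> quat" (infixl "\<star>" 70) where
  "f \<star> g = (\<lambda>q. \<Sum>n. q ^ n * (\<Sum>k\<le>n. scoeff f k * scoeff g (n - k)))"

definition rconj :: "(quat \<Rightarrow> quat) \<Rightarrow> quat \<Rightarrow> quat" where
  "rconj f = (\<lambda>q. \<Sum>n. q ^ n * cnj (scoeff f n))"

definition rsym :: "(quat \<Rightarrow> quat) \<Rightarrow> quat \<Rightarrow> quat" where
  "rsym f = f \<star> rconj f"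

definition rinv :: "(quat \<Rightarrow> quat) \<Rightarrow> quat \<Rightarrow> quat" where
  "rinv f = (\<lambda>q. inverse (rsym f q) * rconj f q)"

definition lin :: "quat \<Rightarrow> quat \<Rightarrow> quat \<Rightarrow> quat" where
  "lin a b = (\<lambda>q. q * a + b)"

definition reg_mobius :: "quat \<Rightarrow> quat \<Rightarrow> quat \<Rightarrow> quat \<Rightarrow> quat \<Rightarrow> quat" where
  "reg_mobius a b c d = rinv (lin c d) \<star> lin a b"

end

theory Submission
  imports Defs "HOL-Complex_Analysis.Complex_Analysis"
begin


lemma cnj_simps [simp]: "Re (cnj x) = Re x" "Im1 (cnj x) = - Im1 x" "Im2 (cnj x) = - Im2 x" "Im3 (cnj x) = - Im3 x"
  by (simp_all add: cnj_def)

lemma quat_of_real_simps [simp]: "Re (of_real r) = r" "Im1 (of_real r) = 0" "Im2 (of_real r) = 0" "Im3 (of_real r) = 0"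
  by (simp_all add: of_real_def)

lemma quat_numeral_simps [simp]: "Re (numeral n) = numeral n" "Im1 (numeral n) = 0" "Im2 (numeral n) = 0" "Im3 (numeral n) = 0"
  using quat_of_real_simps[of "numeral n"] by (simp_all del: quat_of_real_simps)

lemma abs_Re_le: "\<bar>Re x\<bar> \<le> norm x" and abs_Im1_le: "\<bar>Im1 x\<bar> \<le> norm x"
  and abs_Im2_le: "\<bar>Im2 x\<bar> \<le> norm x" and abs_Im3_le: "\<bar>Im3 x\<bar> \<le> norm x"
  by (auto simp: norm_quat_eq intro!: real_le_rsqrt)

lemma bl_Re: "bounded_linear Re" and bl_Im1: "bounded_linear Im1"
  and bl_Im2: "bounded_linear Im2" and bl_Im3: "bounded_linear Im3"
  by (auto intro!: bounded_linear_intro[where K=1] simp: abs_Re_le abs_Im1_le abs_Im2_le abs_Im3_le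
    abs_le_iff[symmetric] | metis abs_Re_le abs_Im1_le abs_Im2_le abs_Im3_le abs_le_D1)+

lemma real_powser_unique:
  fixes c :: "nat \<Rightarrow> real"
  assumes r: "0 < r" and sm: "\<And>x. \<bar>x\<bar> < r \<Longrightarrow> (\<lambda>n. c n * x ^ n) sums 0"
  shows "c n = 0"
proof (rule ccontr)
  assume cn: "c n \<noteq> 0"
  have c0: "c 0 = 0" using sm[of 0] r by simp
  with cn have "n > 0" by (cases n) auto
  have sm': "\<And>x. norm (x - 0) < r \<Longrightarrow> (\<lambda>n. c n * (x-0)^n) sums (\<lambda>_. 0::real) x" using sm by simp
  show False
  proof (rule powser_0_nonzero[where a=c and \<xi>=0 and f="\<lambda>_. 0::real" and m=n, OF r sm' _ cn \<open>n>0\<close>])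
    show "(\<lambda>_. 0::real) 0 = 0" by simp
  next
    fix s :: real assume "0 < s" and h: "\<And>z::real. z \<in> cball 0 s - {0} \<Longrightarrow> (\<lambda>_. 0::real) z \<noteq> 0"
    have "s \<in> cball 0 s - {0}" using \<open>0<s\<close> by simp
    from h[OF this] show False by simp
  qed
qed

lemma quat_powser_unique:
  fixes a b :: "nat \<Rightarrow> quat"
  assumes r: "0 < r" and sa: "\<And>x. \<bar>x\<bar> < r \<Longrightarrow> (\<lambda>n. x ^ n *\<^sub>R a n) sums f x"
    and sb: "\<And>x. \<bar>x\<bar> < r \<Longrightarrow> (\<lambda>n. x ^ n *\<^sub>R b n) sums f x"
  shows "a = b"
proof
  fix n
  have d: "(\<lambda>n. x ^ n *\<^sub>R (a n - b n)) sums 0" if "\<bar>x\<bar> < r" for x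
    using sums_diff[OF sa[OF that] sb[OF that]] by (simp add: scaleR_diff_right)
  have "Re (a n - b n) = 0"
  proof (rule real_powser_unique[OF r])
    fix x :: real assume "\<bar>x\<bar> < r"
    from bounded_linear.sums[OF bl_Re d[OF this]]
    show "(\<lambda>n. Re (a n - b n) * x ^ n) sums 0" by (simp add: mult.commute)
  qed
  moreover have "Im1 (a n - b n) = 0"
  proof (rule real_powser_unique[OF r])
    fix x :: real assume "\<bar>x\<bar> < r"
    from bounded_linear.sums[OF bl_Im1 d[OF this]]
    show "(\<lambda>n. Im1 (a n - b n) * x ^ n) sums 0" by (simp add: mult.commute)
  qed
  moreover have "Im2 (a n - b n) = 0"
  proof (rule real_powser_unique[OF r])
    fix x :: real assume "\<bar>x\<bar> < r"
    from bounded_linear.sums[OF bl_Im2 d[OF this]]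
    show "(\<lambda>n. Im2 (a n - b n) * x ^ n) sums 0" by (simp add: mult.commute)
  qed
  moreover have "Im3 (a n - b n) = 0"
  proof (rule real_powser_unique[OF r])
    fix x :: real assume "\<bar>x\<bar> < r"
    from bounded_linear.sums[OF bl_Im3 d[OF this]]
    show "(\<lambda>n. Im3 (a n - b n) * x ^ n) sums 0" by (simp add: mult.commute)
  qed
  ultimately show "a n = b n" by (simp add: quat_eq_iff)
qed

lemma quat_of_real_pow_mult: "(of_real x :: quat) ^ n * y = x ^ n *\<^sub>R y"
  by (simp add: scaleR_conv_of_real of_real_power)

lemma scoeff_eq:
  assumes "\<forall>q\<in>qball. (\<lambda>n. q ^ n * a n) sums f q"
  shows "scoeff f = a"
proof -
  have ex: "\<forall>q\<in>qball. (\<lambda>n. q ^ n * scoeff f n) sums f q"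
    unfolding scoeff_def by (rule someI[of _ a]) (rule assms)
  show ?thesis
  proof (rule quat_powser_unique[of 1 _ "\<lambda>x. f (of_real x)"])
    fix x :: real assume "\<bar>x\<bar> < 1"
    then have "of_real x \<in> qball" by simp
    then show "(\<lambda>n. x ^ n *\<^sub>R scoeff f n) sums f (of_real x)"
          "(\<lambda>n. x ^ n *\<^sub>R a n) sums f (of_real x)"
      using bspec[OF ex \<open>of_real x \<in> qball\<close>] bspec[OF assms \<open>of_real x \<in> qball\<close>]
      by (simp_all only: quat_of_real_pow_mult)
  qed simp
qed

definition lc :: "quat \<Rightarrow> quat \<Rightarrow> nat \<Rightarrow> quat" where
  "lc a b n = (if n = 0 then b else if n = 1 then a else 0)"

lemma lin_sums: "(\<lambda>n. q ^ n * lc a b n) sums lin a b q"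
proof -
  have "(\<lambda>n. q ^ n * lc a b n) sums (\<Sum>n\<in>{0,1}. q ^ n * lc a b n)"
    by (rule sums_finite) (auto simp: lc_def)
  then show ?thesis by (simp add: lc_def lin_def add.commute)
qed

lemma scoeff_lin: "scoeff (lin a b) = lc a b"
  by (rule scoeff_eq) (simp add: lin_sums)

lemma cnj_lc: "cnj (lc a b n) = lc (cnj a) (cnj b) n"
  by (simp add: lc_def cnj_def zero_quat_def)

lemma rconj_lin: "rconj (lin a b) = lin (cnj a) (cnj b)"
proof
  fix q
  show "rconj (lin a b) q = lin (cnj a) (cnj b) q"
    unfolding rconj_def scoeff_lin cnj_lc using lin_sums sums_unique by metis
qed

lemma star_coeff: "(\<Sum>k\<le>n. lc a b k * lc c d (n-k)) =
   (if n = 0 then b * d else if n = 1 then b * c + a * d else if n = 2 then a * c else 0)"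
proof -
  consider "n = 0" | "n = 1" | "n = 2" | "n \<ge> 3" by linarith
  then show ?thesis
  proof cases
    case 4
    then have "(\<Sum>k\<le>n. lc a b k * lc c d (n-k)) = 0"
      by (intro sum.neutral) (auto simp: lc_def)
    with 4 show ?thesis by simp
  next
    case 3
    have e: "{..2::nat} = {0,1,2}" by auto
    show ?thesis unfolding 3 e by (simp add: lc_def)
  qed (simp_all add: lc_def atMost_Suc)
qed

lemma star_lin: "(lin a b \<star> lin c d) q = q^2 * (a * c) + q * (b * c + a * d) + b * d"
proof -
  let ?f = "\<lambda>n. q ^ n * (\<Sum>k\<le>n. lc a b k * lc c d (n-k))"
  have "?f sums (\<Sum>n\<in>{0,1,2}. ?f n)"
    by (rule sums_finite) (auto simp: star_coeff)
  then have "?f sums (q^2 * (a * c) + q * (b * c + a * d) + b * d)"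
  proof -
    have "(\<Sum>n\<in>{0,1,2}. ?f n) = ?f 0 + ?f 1 + ?f 2" by simp
    also have "\<dots> = b * d + q * (b * c + a * d) + q^2 * (a * c)"
      by (simp only: star_coeff) simp
    finally show ?thesis using \<open>?f sums _\<close> by (simp add: add_ac)
  qed
  then show ?thesis unfolding star_def scoeff_lin by (simp add: sums_iff)
qed

lemma mult_cnj_self: "x * cnj x = of_real ((norm x)\<^sup>2)"
  by (simp add: quat_eq_iff norm_quat_eq power2_eq_square)
lemma cnj_mult_self: "cnj x * x = of_real ((norm x)\<^sup>2)"
  by (simp add: quat_eq_iff norm_quat_eq power2_eq_square)
lemma mult_cnj_sym: "d * cnj c + c * cnj d = of_real (2 * inner c d)"
  by (simp add: quat_eq_iff inner_quat_def)

lemma of_real_comm: "of_real r * (x::quat) = x * of_real r"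
  by (simp add: quat_eq_iff)

definition PP :: "quat \<Rightarrow> quat \<Rightarrow> quat \<Rightarrow> quat" where
  "PP c d q = of_real ((norm d)\<^sup>2) + of_real (2 * inner c d) * q + of_real ((norm c)\<^sup>2) * q^2"

lemma rsym_lin: "rsym (lin c d) q = PP c d q"
  unfolding rsym_def rconj_lin star_lin mult_cnj_self mult_cnj_sym PP_def
  by (simp add: quat_eq_iff power2_eq_square algebra_simps)



definition emb :: "quat \<Rightarrow> complex \<Rightarrow> quat" where
  "emb J z = of_real (complex.Re z) + of_real (Im z) * J"

locale unitJ = fixes J :: quat
  assumes J0: "Re J = 0" and J1: "(Im1 J)\<^sup>2 + (Im2 J)\<^sup>2 + (Im3 J)\<^sup>2 = 1"
begin

lemma JJ: "J * J = -1"
  using J0 J1 by (simp add: quat_eq_iff power2_eq_square algebra_simps)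

lemma emb_add: "emb J (z + w) = emb J z + emb J w"
  by (simp add: emb_def algebra_simps)

lemma emb_mult: "emb J (z * w) = emb J z * emb J w"
  using J0 J1 unfolding quat_eq_iff
  by (simp add: emb_def power2_eq_square) algebra

lemma emb_one: "emb J 1 = 1" by (simp add: emb_def)
lemma emb_of_real: "emb J (of_real r) = of_real r" by (simp add: emb_def)
lemma emb_pow: "emb J (z ^ n) = emb J z ^ n"
  by (induction n) (simp_all add: emb_one emb_mult)
lemma emb_inverse: "emb J (inverse z) = inverse (emb J z)"
proof (cases "z = 0")
  case True then show ?thesis by (simp add: emb_def)
next
  case False
  then have "emb J z * emb J (inverse z) = 1" by (simp flip: emb_mult add: emb_one)
  then show ?thesis by (metis inverse_unique)
qed

lemma emb_sums: "f sums l \<Longrightarrow> (\<lambda>n. emb J (f n)) sums emb J l"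
  unfolding emb_def
  by (intro sums_add sums_of_real sums_mult2 sums_Re sums_Im)

end


lemma poly_nz:
  fixes s0 b1 t2 :: real and z :: complex
  assumes ts: "t2 < s0" "0 \<le> t2" "b1^2 \<le> 4 * s0 * t2" and nz: "norm z < 1"
  shows "of_real s0 + of_real b1 * z + of_real t2 * z^2 \<noteq> 0"
proof
  assume eq: "of_real s0 + of_real b1 * z + of_real t2 * z^2 = 0"
  define x where "x = complex.Re z"
  define y where "y = Im z"
  have e1: "s0 + b1*x + t2*(x^2 - y^2) = 0" and e2: "y*(b1 + 2*t2*x) = 0"
    using arg_cong[OF eq, of complex.Re] arg_cong[OF eq, of Im]
    by (simp_all add: x_def y_def power2_eq_square algebra_simps)
  have n: "x^2 + y^2 < 1" using nz by (simp add: x_def y_def cmod_def real_sqrt_lt_1_iff)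
  have tx: "t2 * x^2 \<le> t2" "t2 * (x^2 + y^2) \<le> t2"
  proof -
    have "x^2 \<le> 1" "x^2 + y^2 \<le> 1" using n by (smt (verit) zero_le_power2)+
    then show "t2 * x^2 \<le> t2" "t2 * (x^2 + y^2) \<le> t2" using ts(2) by (simp_all add: mult_left_le)
  qed
  show False
  proof (cases "y = 0")
    case True
    with e1 have e1': "s0 + b1*x + t2*x^2 = 0" by simp
    have h1: "t2*x^2 + b1*x = - s0" using e1' by linarith
    have "(2*t2*x + b1)^2 = 4*t2*(t2*x^2 + b1*x) + b1^2" by (simp add: power2_eq_square algebra_simps)
    with h1 have sq: "(2*t2*x + b1)^2 = b1^2 - 4 * s0 * t2" by simp
    hence "(2*t2*x + b1)^2 = 0" using ts(3) zero_le_power2[of "2*t2*x + b1"] by linarith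
    hence b: "b1 = - 2*t2*x" by simp
    hence "t2 * (t2*x^2 - s0) = 0" using sq by (simp add: power2_eq_square algebra_simps) (metis mult.commute)
    moreover have "t2 \<noteq> 0"
    proof
      assume "t2 = 0" with b e1' show False using ts by simp
    qed
    ultimately have "t2 * x^2 = s0" by simp
    then show False using tx ts by simp
  next
    case False
    with e2 have "b1 = - 2*t2*x" by simp
    with e1 have "s0 = t2 * (x^2 + y^2)" by (simp add: power2_eq_square algebra_simps)
    then show False using tx ts by simp
  qed
qed

lemma complex_inv_poly_series:
  fixes s0 b1 t2 :: real
  assumes ts: "t2 < s0" "0 \<le> t2" "b1^2 \<le> 4 * s0 * t2"
  obtains p :: "nat \<Rightarrow> real" where "\<And>z::complex. norm z < 1 \<Longrightarrow>
     (\<lambda>n. of_real (p n) * z^n) sums inverse (of_real s0 + of_real b1 * z + of_real t2 * z^2)"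
proof -
  define f where "f z = inverse (of_real s0 + of_real b1 * z + of_real t2 * z^2)" for z :: complex
  have hol: "f holomorphic_on ball 0 1"
    unfolding f_def by (intro holomorphic_intros) (use poly_nz[OF ts] in auto)
  define pc where "pc n = (deriv ^^ n) f 0 / fact n" for n
  have s1: "(\<lambda>n. pc n * z^n) sums f z" if "norm z < 1" for z
    using holomorphic_power_series[OF hol, of z] that by (simp add: pc_def)
  have fc: "Complex.cnj (f (Complex.cnj z)) = f z" for z by (simp add: f_def)
  have s2: "(\<lambda>n. Complex.cnj (pc n) * z^n) sums f z" if "norm z < 1" for z
  proof -
    have "(\<lambda>n. pc n * (Complex.cnj z)^n) sums f (Complex.cnj z)" using s1[of "Complex.cnj z"] that by simp
    then have "(\<lambda>n. Complex.cnj (pc n * (Complex.cnj z)^n)) sums Complex.cnj (f (Complex.cnj z))" by (simp only: sums_cnj)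
    then show ?thesis by (simp add: fc)
  qed
  show ?thesis
  proof (rule that[of "\<lambda>n. complex.Re (pc n)"])
    fix z :: complex assume z: "norm z < 1"
    have "(\<lambda>n. (pc n * z^n + Complex.cnj (pc n) * z^n) / 2) sums ((f z + f z) / 2)"
      by (intro sums_divide sums_add s1 s2 z)
    moreover have "(pc n * z^n + Complex.cnj (pc n) * z^n) / 2 = of_real (complex.Re (pc n)) * z^n" for n
      by (simp add: complex_add_cnj distrib_right[symmetric])
    ultimately show "(\<lambda>n. of_real (complex.Re (pc n)) * z^n) sums inverse (of_real s0 + of_real b1 * z + of_real t2 * z^2)"
      by (simp add: f_def)
  qed
qed


lemma quat_inv_poly_series:
  fixes s0 b1 t2 :: real
  assumes ts: "t2 < s0" "0 \<le> t2" "b1^2 \<le> 4 * s0 * t2"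
  obtains p :: "nat \<Rightarrow> real" where "\<And>q::quat. norm q < 1 \<Longrightarrow>
     (\<lambda>n. q^n * of_real (p n)) sums inverse (of_real s0 + of_real b1 * q + of_real t2 * q^2)"
proof -
  obtain p :: "nat \<Rightarrow> real" where p: "\<And>z::complex. norm z < 1 \<Longrightarrow>
     (\<lambda>n. of_real (p n) * z^n) sums inverse (of_real s0 + of_real b1 * z + of_real t2 * z^2)"
    using complex_inv_poly_series[OF ts] by blast
  show ?thesis
  proof (rule that[of p])
    fix q :: quat assume q: "norm q < 1"
    define v where "v = Quat 0 (Im1 q) (Im2 q) (Im3 q)"
    define nv where "nv = norm v"
    define J where "J = (if nv = 0 then Quat 0 1 0 0 else (1 / nv) *\<^sub>R v)"
    have nv2: "nv^2 = (Im1 q)\<^sup>2 + (Im2 q)\<^sup>2 + (Im3 q)\<^sup>2"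
      by (simp add: nv_def v_def norm_quat_eq)
    have nvpos: "nv \<ge> 0" by (simp add: nv_def)
    interpret unitJ J
    proof
      show "Re J = 0" by (simp add: J_def v_def)
      show "(Im1 J)\<^sup>2 + (Im2 J)\<^sup>2 + (Im3 J)\<^sup>2 = 1"
      proof (cases "nv = 0")
        case False
        then have ne: "(Im1 q)\<^sup>2 + ((Im2 q)\<^sup>2 + (Im3 q)\<^sup>2) \<noteq> 0" using nv2 False by (metis add.assoc power_not_zero)
        show ?thesis using False ne by (simp add: J_def v_def nv2 power_divide add_divide_distrib[symmetric] add.assoc)
      qed (simp add: J_def)
    qed
    define z0 where "z0 = Complex (Re q) nv"
    have ez: "emb J z0 = q"
    proof (cases "nv = 0")
      case True
      then have sq0: "(Im1 q)\<^sup>2 + (Im2 q)\<^sup>2 + (Im3 q)\<^sup>2 = 0" using nv2 by simp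
      have "(Im1 q)\<^sup>2 = 0" "(Im2 q)\<^sup>2 = 0" "(Im3 q)\<^sup>2 = 0"
        using sq0 zero_le_power2[of "Im1 q"] zero_le_power2[of "Im2 q"] zero_le_power2[of "Im3 q"] by linarith+
      then have "Im1 q = 0" "Im2 q = 0" "Im3 q = 0" by simp_all
      then show ?thesis using True by (simp add: emb_def z0_def quat_eq_iff J_def)
    next
      case False
      then show ?thesis by (simp add: emb_def z0_def quat_eq_iff J_def v_def)
    qed
    have "norm z0 = norm q"
      by (simp add: z0_def cmod_def norm_quat_eq nv2 add.assoc)
    with q have "norm z0 < 1" by simp
    from emb_sums[OF p[OF this]]
    have "(\<lambda>n. emb J (of_real (p n) * z0^n)) sums emb J (inverse (of_real s0 + of_real b1 * z0 + of_real t2 * z0^2))" .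
    then show "(\<lambda>n. q^n * of_real (p n)) sums inverse (of_real s0 + of_real b1 * q + of_real t2 * q^2)"
      by (simp add: emb_mult emb_inverse emb_add emb_pow emb_of_real ez of_real_comm)
  qed
qed



lemma sp11_norms:
  assumes "sp11 a b c d"
  shows "(norm d)\<^sup>2 = (norm c)\<^sup>2 + 1" "(norm a)\<^sup>2 = (norm b)\<^sup>2 + 1"
proof -
  from assms have e1: "cnj a * a + cnj b * (- b) = 1" and e4: "cnj c * c + cnj d * (- d) = - 1"
    by (simp_all add: sp11_def)
  from arg_cong[OF e4, of Re] show "(norm d)\<^sup>2 = (norm c)\<^sup>2 + 1"
    by (simp add: cnj_mult_self[symmetric] norm_quat_eq power2_eq_square)
  from arg_cong[OF e1, of Re] show "(norm a)\<^sup>2 = (norm b)\<^sup>2 + 1"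
    by (simp add: norm_quat_eq power2_eq_square)
qed

lemma inverse_comm:
  fixes x y :: quat
  assumes "x * y = y * x"
  shows "x * inverse y = inverse y * x"
proof (cases "y = 0")
  case False
  have 1: "inverse y * (y * x) * inverse y = x * inverse y" using False by (simp add: mult.assoc[symmetric])
  have 2: "inverse y * (x * y) * inverse y = inverse y * x" using False by (simp add: mult.assoc)
  have "x * inverse y = inverse y * (y * x) * inverse y" using 1 by (rule sym)
  also have "\<dots> = inverse y * (x * y) * inverse y" using assms by (simp only:)
  also have "\<dots> = inverse y * x" by (rule 2)
  finally show ?thesis .
qed simp

lemma PP_comm: "q * PP c d q = PP c d q * q"
  by (simp add: PP_def quat_eq_iff power2_eq_square algebra_simps)

lemma rinv_lin: "rinv (lin c d) q = inverse (PP c d q) * (cnj d + q * cnj c)"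
  unfolding rinv_def rsym_lin rconj_lin by (simp add: lin_def add.commute)

lemma rinv_series:
  assumes nd: "(norm d)\<^sup>2 = (norm c)\<^sup>2 + 1"
  obtains e where "\<forall>q\<in>qball. (\<lambda>n. q^n * e n) sums rinv (lin c d) q"
proof -
  have cs: "(2 * inner c d)^2 \<le> 4 * (norm d)\<^sup>2 * (norm c)\<^sup>2"
  proof -
    have "\<bar>inner c d\<bar> \<le> norm c * norm d" by (rule Cauchy_Schwarz_ineq2)
    then have "\<bar>inner c d\<bar>^2 \<le> (norm c * norm d)^2"
      by (rule power_mono) simp
    then have "(inner c d)^2 \<le> (norm c * norm d)^2" by simp
    then show ?thesis by (simp add: power_mult_distrib mult.commute)
  qed
  have h1: "(norm c)\<^sup>2 < (norm d)\<^sup>2" using nd by simp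
  have h2: "0 \<le> (norm c)\<^sup>2" by simp
  obtain p :: "nat \<Rightarrow> real" where p: "\<And>q::quat. norm q < 1 \<Longrightarrow>
     (\<lambda>n. q^n * of_real (p n)) sums inverse (of_real ((norm d)\<^sup>2) + of_real (2 * inner c d) * q + of_real ((norm c)\<^sup>2) * q^2)"
    using quat_inv_poly_series[OF h1 h2 cs] by blast
  define e where "e n = of_real (p n) * cnj d + (if n = 0 then 0 else of_real (p (n-1)) * cnj c)" for n
  show ?thesis
  proof (rule that[of e], intro ballI)
    fix q :: quat assume "q \<in> qball"
    then have q: "norm q < 1" by simp
    have pq: "(\<lambda>n. q^n * of_real (p n)) sums inverse (PP c d q)" using p[OF q] by (simp add: PP_def)
    have S1: "(\<lambda>n. q^n * of_real (p n) * cnj d) sums (inverse (PP c d q) * cnj d)"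
      by (rule sums_mult2[OF pq])
    have S2: "(\<lambda>n. q^n * (if n = 0 then 0 else of_real (p (n-1)) * cnj c)) sums (q * inverse (PP c d q) * cnj c)"
    proof (rule sums_Suc_imp)
      show "(\<lambda>n. q ^ Suc n * (if Suc n = 0 then 0 else of_real (p (Suc n - 1)) * cnj c)) sums (q * inverse (PP c d q) * cnj c)"
        using sums_mult2[OF sums_mult[OF pq, of q], of "cnj c"] by (simp add: mult.assoc)
    qed simp
    have "(\<lambda>n. q^n * e n) sums (inverse (PP c d q) * cnj d + q * inverse (PP c d q) * cnj c)"
      using sums_add[OF S1 S2] by (simp add: e_def distrib_left mult.assoc)
    moreover have "q * inverse (PP c d q) = inverse (PP c d q) * q" by (rule inverse_comm[OF PP_comm])
    ultimately show "(\<lambda>n. q^n * e n) sums rinv (lin c d) q"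
      by (simp add: rinv_lin distrib_left mult.assoc)
  qed
qed

lemma inner_star:
  "(\<Sum>k\<le>n. e k * lc a b (n-k)) = e n * b + (if n = 0 then 0 else e (n-1) * a)"
proof -
  have "(\<Sum>k\<le>n. e k * lc a b (n-k)) = (\<Sum>k\<le>n. (if k = n then e n * b else 0) + (if n \<noteq> 0 \<and> k = n - 1 then e (n-1) * a else 0))"
    by (rule sum.cong) (auto simp: lc_def)
  also have "\<dots> = e n * b + (if n = 0 then 0 else e (n-1) * a)"
    by (simp add: sum.distrib)
  finally show ?thesis .
qed

lemma reg_mobius_series:
  assumes "sp11 a b c d"
  shows "\<exists>s. \<forall>q\<in>qball. (\<lambda>n. q^n * s n) sums reg_mobius a b c d q \<and>
     reg_mobius a b c d q = rinv (lin c d) q * b + q * rinv (lin c d) q * a"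
proof -
  obtain e where e: "\<forall>q\<in>qball. (\<lambda>n. q^n * e n) sums rinv (lin c d) q"
    by (rule rinv_series[OF sp11_norms(1)[OF assms]])
  have se: "scoeff (rinv (lin c d)) = e" by (rule scoeff_eq[OF e])
  define s where "s n = e n * b + (if n = 0 then 0 else e (n-1) * a)" for n
  have S: "(\<lambda>n. q^n * s n) sums (rinv (lin c d) q * b + q * rinv (lin c d) q * a)" if q: "q \<in> qball" for q
  proof -
    have eq: "(\<lambda>n. q^n * e n) sums rinv (lin c d) q" using e q by blast
    have S1: "(\<lambda>n. q^n * e n * b) sums (rinv (lin c d) q * b)" by (rule sums_mult2[OF eq])
    have S2: "(\<lambda>n. q^n * (if n = 0 then 0 else e (n-1) * a)) sums (q * rinv (lin c d) q * a)"
    proof (rule sums_Suc_imp)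
      show "(\<lambda>n. q ^ Suc n * (if Suc n = 0 then 0 else e (Suc n - 1) * a)) sums (q * rinv (lin c d) q * a)"
        using sums_mult2[OF sums_mult[OF eq, of q], of a] by (simp add: mult.assoc)
    qed simp
    show ?thesis using sums_add[OF S1 S2] by (simp add: s_def distrib_left mult.assoc)
  qed
  have R: "reg_mobius a b c d q = rinv (lin c d) q * b + q * rinv (lin c d) q * a" if q: "q \<in> qball" for q
  proof -
    have "reg_mobius a b c d q = (\<Sum>n. q^n * (\<Sum>k\<le>n. scoeff (rinv (lin c d)) k * scoeff (lin a b) (n-k)))"
      by (simp only: reg_mobius_def star_def)
    also have "\<dots> = (\<Sum>n. q^n * s n)"
      by (simp only: se scoeff_lin inner_star s_def)
    finally have "reg_mobius a b c d q = (\<Sum>n. q^n * s n)" .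
    then show ?thesis using S[OF q] by (simp add: sums_iff)
  qed
  show ?thesis
  proof (intro exI[of _ s] ballI conjI)
    fix q :: quat assume q: "q \<in> qball"
    show "(\<lambda>n. q^n * s n) sums reg_mobius a b c d q" using S[OF q] R[OF q] by simp
    show "reg_mobius a b c d q = rinv (lin c d) q * b + q * rinv (lin c d) q * a" by (rule R[OF q])
  qed
qed



lemma quat_geom:
  fixes y :: quat
  assumes y: "norm y < 1"
  shows "(\<lambda>n. y^n) sums inverse (1 - y)"
proof -
  have ne: "1 - y \<noteq> 0" using y by auto
  have ps: "(\<Sum>k<n. y^k) * (1 - y) = 1 - y^n" for n
  proof (induction n)
    case (Suc n)
    have "(\<Sum>k<Suc n. y^k) * (1-y) = (\<Sum>k<n. y^k)*(1-y) + y^n*(1-y)" by (simp add: distrib_right)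
    also have "\<dots> = 1 - y^n*y" using Suc.IH by (simp add: right_diff_distrib)
    also have "\<dots> = 1 - y^Suc n" by (simp only: power_Suc2)
    finally show ?case .
  qed simp
  have ps2: "(\<Sum>k<n. y^k) = (1 - y^n) * inverse (1 - y)" for n
  proof -
    have "(\<Sum>k<n. y^k) = (\<Sum>k<n. y^k) * (1 - y) * inverse (1 - y)" using ne by (simp add: mult.assoc)
    then show ?thesis by (simp only: ps)
  qed
  have "(\<lambda>n. (1 - y^n) * inverse (1 - y)) \<longlonglongrightarrow> (1 - 0) * inverse (1 - y)"
    by (intro tendsto_intros LIMSEQ_power_zero y)
  then show ?thesis unfolding sums_def ps2 by simp
qed

lemma of_real_comm': "(x::quat) * of_real r = of_real r * x"
  by (simp add: quat_eq_iff)

lemma real_quat_of_comm: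
  fixes x :: quat
  assumes "x * Quat 0 1 0 0 = Quat 0 1 0 0 * x" "x * Quat 0 0 1 0 = Quat 0 0 1 0 * x"
  shows "x = of_real (Re x)"
  using assms by (simp add: quat_eq_iff)

lemma mobius_expansion:
  assumes sp: "sp11 a b c d" and q: "norm q < 1" and x: "\<bar>x\<bar> < 1"
  shows "(\<lambda>n. x^n *\<^sub>R (inverse d * ((- (q * (c * inverse d)))^n * b
            + (if n = 0 then 0 else (- (q * (c * inverse d)))^(n-1) * q * a))))
         sums mobius a b c d (x *\<^sub>R q)"
proof -
  define w where "w = c * inverse d"
  define g where "g = - (q * w)"
  define y where "y = x *\<^sub>R g"
  have nd: "(norm d)\<^sup>2 = (norm c)\<^sup>2 + 1" by (rule sp11_norms(1)[OF sp])
  have d0: "d \<noteq> 0"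
  proof
    assume "d = 0"
    with nd have "(norm c)\<^sup>2 + 1 = 0" by simp
    then show False using zero_le_power2[of "norm c"] by linarith
  qed
  have "(norm c)\<^sup>2 < (norm d)\<^sup>2" using nd by simp
  then have "norm c < norm d" by (rule power_less_imp_less_base) simp
  moreover have "norm w = norm c / norm d" unfolding w_def by (simp add: norm_mult norm_inverse divide_inverse)
  ultimately have nw: "norm w < 1" using d0 by simp
  have ny: "norm y < 1"
  proof -
    have "norm y = \<bar>x\<bar> * (norm q * norm w)" by (simp add: y_def g_def norm_mult)
    also have "\<dots> \<le> 1 * (norm q * norm w)"
      using x by (intro mult_right_mono) simp_all
    also have "\<dots> < 1"
    proof -
      have "norm q * norm w \<le> norm q" using nw by (intro mult_left_le) simp_all
      then show ?thesis using q by simp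
    qed
    finally show ?thesis .
  qed
  have wd: "w * d = c" using d0 by (simp add: w_def mult.assoc)
  have den: "(x *\<^sub>R q) * c + d = (1 - y) * d"
    by (simp add: y_def g_def wd[symmetric] algebra_simps scaleR_conv_of_real)
  have geo: "(\<lambda>n. y^n) sums inverse (1 - y)" by (rule quat_geom[OF ny])
  have ne: "1 - y \<noteq> 0" using ny by auto
  have mob: "mobius a b c d (x *\<^sub>R q) = inverse d * inverse (1 - y) * b + inverse d * inverse (1 - y) * ((x *\<^sub>R q) * a)"
  proof -
    have "inverse ((1 - y) * d) = inverse d * inverse (1 - y)" by (rule nonzero_inverse_mult_distrib[OF ne d0])
    then show ?thesis unfolding mobius_def den by (simp add: distrib_left mult.assoc)
  qed
  have yn: "y^n = x^n *\<^sub>R g^n" for n by (induction n) (simp_all add: y_def)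
  have S1: "(\<lambda>n. x^n *\<^sub>R (inverse d * g^n * b)) sums (inverse d * inverse (1 - y) * b)"
    using sums_mult2[OF sums_mult[OF geo, of "inverse d"], of b] by (simp add: yn mult.assoc)
  have S2: "(\<lambda>n. x^n *\<^sub>R (inverse d * (if n = 0 then 0 else g^(n-1) * q * a)))
      sums (inverse d * inverse (1 - y) * ((x *\<^sub>R q) * a))"
  proof (rule sums_Suc_imp)
    show "(\<lambda>n. x^Suc n *\<^sub>R (inverse d * (if Suc n = 0 then 0 else g^(Suc n - 1) * q * a)))
      sums (inverse d * inverse (1 - y) * ((x *\<^sub>R q) * a))"
      using sums_mult2[OF sums_mult[OF geo, of "inverse d"], of "(x *\<^sub>R q) * a"]
      by (simp add: yn mult.assoc)
  qed simp
  show ?thesis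
    using sums_add[OF S1 S2] unfolding mob g_def w_def
    by (simp add: distrib_left scaleR_add_right mult.assoc)
qed


lemma real_quat_of_comm2:
  fixes x :: quat
  assumes "x * Quat 0 (1/2) 0 0 = Quat 0 (1/2) 0 0 * x" "x * Quat 0 0 (1/2) 0 = Quat 0 0 (1/2) 0 * x"
  shows "x = of_real (Re x)"
  using assms by (simp add: quat_eq_iff)

lemma norm_half_i: "norm (Quat 0 (1/2) 0 0) < 1" and norm_half_j: "norm (Quat 0 0 (1/2) 0) < 1"
  by (simp_all add: norm_quat_eq power2_eq_square real_sqrt_lt_1_iff)

lemma classical_regular_real:
  assumes sp: "sp11 a b c d" and ser: "\<forall>q\<in>qball. (\<lambda>n. q^n * s n) sums mobius a b c d q"
  shows "c = of_real (Re c) \<and> d = of_real (Re d)"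
proof -
  define \<delta> where "\<delta> = inverse d"
  define w where "w = c * inverse d"
  define m where "m = a - w * b"
  define A where "A q n = inverse d * ((- (q * (c * inverse d)))^n * b
            + (if n = 0 then 0 else (- (q * (c * inverse d)))^(n-1) * q * a))" for q n
  have nd: "(norm d)\<^sup>2 = (norm c)\<^sup>2 + 1" by (rule sp11_norms(1)[OF sp])
  have d0: "d \<noteq> 0"
  proof
    assume "d = 0"
    with nd have "(norm c)\<^sup>2 + 1 = 0" by simp
    then show False using zero_le_power2[of "norm c"] by linarith
  qed
  have coef: "A q = (\<lambda>n. q^n * s n)" if q: "norm q < 1" for q
  proof (rule quat_powser_unique[of 1 _ "\<lambda>x. mobius a b c d (x *\<^sub>R q)"])
    fix x :: real assume x: "\<bar>x\<bar> < 1"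
    show "(\<lambda>n. x ^ n *\<^sub>R A q n) sums mobius a b c d (x *\<^sub>R q)"
      unfolding A_def by (rule mobius_expansion[OF sp q x])
    have "norm (x *\<^sub>R q) < 1"
    proof -
      have "norm (x *\<^sub>R q) = \<bar>x\<bar> * norm q" by simp
      also have "\<dots> \<le> norm q" using x by (intro mult_left_le_one_le) simp_all
      finally show ?thesis using q by simp
    qed
    then have "x *\<^sub>R q \<in> qball" by simp
    from bspec[OF ser this] have "(\<lambda>n. (x *\<^sub>R q)^n * s n) sums mobius a b c d (x *\<^sub>R q)" .
    moreover have "(x *\<^sub>R q)^n = x^n *\<^sub>R q^n" for n by (induction n) simp_all
    ultimately show "(\<lambda>n. x ^ n *\<^sub>R (q^n * s n)) sums mobius a b c d (x *\<^sub>R q)" by simp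
  qed simp
  have E1: "\<delta> * q * m = q * s 1" if q: "norm q < 1" for q
  proof -
    have "A q 1 = q * s 1" using fun_cong[OF coef[OF q], of 1] by simp
    moreover have "A q 1 = \<delta> * q * m"
      by (simp add: A_def \<delta>_def m_def w_def algebra_simps)
    ultimately show ?thesis by simp
  qed
  have E2: "- (\<delta> * q * w * q * m) = q^2 * s 2" if q: "norm q < 1" for q
  proof -
    have "A q 2 = q^2 * s 2" using fun_cong[OF coef[OF q], of 2] by simp
    moreover have "A q 2 = - (\<delta> * q * w * q * m)"
      by (simp add: A_def \<delta>_def m_def w_def algebra_simps power2_eq_square numeral_2_eq_2)
    ultimately show ?thesis by simp
  qed
  have m0: "m \<noteq> 0"
  proof -
    from sp have e1: "cnj a * a + cnj b * (- b) = 1" and e2: "cnj a * c + cnj b * (- d) = 0"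
      by (simp_all add: sp11_def)
    from e2 have "cnj a * c = cnj b * d" by (simp add: algebra_simps)
    then have "cnj a * c * inverse d = cnj b" using d0 by (simp add: mult.assoc)
    then have k: "cnj a * c * inverse d * b = cnj b * b" by simp
    have "cnj a * m = cnj a * a - cnj a * c * inverse d * b" by (simp add: m_def w_def right_diff_distrib mult.assoc)
    also have "\<dots> = cnj a * a - cnj b * b" using k by simp
    also have "\<dots> = 1" using e1 by (simp add: algebra_simps)
    finally show ?thesis by auto
  qed
  define h :: quat where "h = (1/2::real) *\<^sub>R 1"
  have nh: "norm h < 1" unfolding h_def by simp
  have s1: "s 1 = \<delta> * m"
  proof -
    have "(1/2::real) *\<^sub>R (\<delta> * m) = (1/2::real) *\<^sub>R s 1" using E1[OF nh] by (simp add: h_def)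
    then show ?thesis by simp
  qed
  have comm_d: "\<delta> * qq = qq * \<delta>" if "norm qq < 1" for qq
  proof -
    have "\<delta> * qq * m = qq * \<delta> * m" using E1[OF that] s1 by (simp add: mult.assoc)
    then show ?thesis using m0 by simp
  qed
  have \<delta>r: "\<delta> = of_real (Re \<delta>)"
    by (rule real_quat_of_comm2) (rule comm_d, simp add: norm_half_i norm_half_j)+
  have \<delta>0: "\<delta> \<noteq> 0" using d0 by (simp add: \<delta>_def)
  then have r0: "Re \<delta> \<noteq> 0" using \<delta>r by (metis of_real_0)
  have \<delta>s: "\<delta> = Re \<delta> *\<^sub>R 1" using \<delta>r by (simp add: scaleR_conv_of_real)
  have dr: "d = of_real (Re d)"
  proof -
    have "d = inverse \<delta>" using d0 by (simp add: \<delta>_def)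
    also have "\<dots> = of_real (inverse (Re \<delta>))" by (subst \<delta>r) (simp add: of_real_inverse)
    finally show ?thesis by (metis quat_of_real_simps(1))
  qed
  have s2: "s 2 = - (\<delta> * w * m)"
  proof -
    have "- (\<delta> * h * w * h * m) = h^2 * s 2" by (rule E2[OF nh])
    then have "(1/4::real) *\<^sub>R (- (\<delta> * w * m)) = (1/4::real) *\<^sub>R s 2"
      by (simp add: h_def power2_eq_square)
    then have "(1/4::real) *\<^sub>R (- (\<delta> * w * m)) = (1/4::real) *\<^sub>R s 2" by simp
    then show ?thesis by (metis scaleR_cancel_left zero_neq_numeral divide_eq_0_iff one_neq_zero)
  qed
  have comm_w: "w * qq = qq * w" if "norm qq < 1" "qq \<noteq> 0" for qq
  proof -
    have "- (\<delta> * qq * w * qq * m) = qq^2 * (- (\<delta> * w * m))" using E2[OF that(1)] s2 by simp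
    then have "Re \<delta> *\<^sub>R (qq * w * qq * m) = Re \<delta> *\<^sub>R (qq * qq * w * m)"
      by (subst (asm) \<delta>s, subst (asm) \<delta>s) (simp add: power2_eq_square mult.assoc)
    then have "qq * w * qq * m = qq * qq * w * m" using r0 by simp
    then have "qq * w * qq = qq * qq * w" by (simp only: mult_right_cancel[OF m0])
    then have "qq * (w * qq) = qq * (qq * w)" by (simp only: mult.assoc)
    then show ?thesis by (simp only: mult_left_cancel[OF that(2)])
  qed
  have wr: "w = of_real (Re w)"
    by (rule real_quat_of_comm2; rule comm_w) (simp_all add: norm_half_i norm_half_j quat_eq_iff)
  have "c = w * d" using d0 by (simp add: w_def mult.assoc)
  then have "c = of_real (Re w * Re d)" by (subst (asm) wr, subst (asm) dr) simp
  then have "c = of_real (Re c)" by (metis quat_of_real_simps(1))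
  with dr show ?thesis by simp
qed



lemma mobius_real_form:
  assumes dr: "dr \<noteq> 0" and t: "\<bar>t\<bar> < 1" and q: "norm q < 1"
  shows "mobius (dr *\<^sub>R u) ((-t*dr) *\<^sub>R u) (of_real (-t*dr)) (of_real dr) q
         = inverse (1 - q * of_real t) * (q - of_real t) * u"
proof -
  have nqt: "norm (q * of_real t) < 1"
  proof -
    have "norm (q * of_real t) = norm q * \<bar>t\<bar>" by (simp add: norm_mult)
    also have "\<dots> \<le> norm q" using t by (intro mult_left_le) simp_all
    finally show ?thesis using q by simp
  qed
  then have ne: "1 - q * of_real t \<noteq> 0" by auto
  have den: "q * of_real (-t*dr) + of_real dr = (1 - q * of_real t) * of_real dr"
    by (simp add: quat_eq_iff algebra_simps)
  have num: "q * (dr *\<^sub>R u) + (-t*dr) *\<^sub>R u = dr *\<^sub>R ((q - of_real t) * u)"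
    by (simp add: quat_eq_iff algebra_simps)
  have iv: "inverse (of_real dr :: quat) = inverse dr *\<^sub>R 1"
    by (simp add: of_real_def[symmetric])
  have inv: "inverse ((1 - q * of_real t) * of_real dr) = inverse (of_real dr) * inverse (1 - q * of_real t)"
    by (rule nonzero_inverse_mult_distrib[OF ne]) (simp add: dr)
  have "mobius (dr *\<^sub>R u) ((-t*dr) *\<^sub>R u) (of_real (-t*dr)) (of_real dr) q
      = inverse (of_real dr) * inverse (1 - q * of_real t) * (dr *\<^sub>R ((q - of_real t) * u))"
    unfolding mobius_def den num inv ..
  also have "\<dots> = (inverse dr * dr) *\<^sub>R (inverse (1 - q * of_real t) * ((q - of_real t) * u))"
    unfolding iv by (simp add: mult.assoc)
  also have "\<dots> = inverse (1 - q * of_real t) * (q - of_real t) * u" using dr by (simp add: mult.assoc)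
  finally show ?thesis .
qed

lemma reg_eq_mob_real:
  assumes sp: "sp11 a b c d" and c: "c = of_real cr" and d: "d = of_real dr" and q: "q \<in> qball"
  shows "reg_mobius a b c d q = mobius a b c d q"
proof -
  obtain s where s: "\<forall>q\<in>qball. (\<lambda>n. q^n * s n) sums reg_mobius a b c d q \<and>
     reg_mobius a b c d q = rinv (lin c d) q * b + q * rinv (lin c d) q * a"
    using reg_mobius_series[OF sp] by blast
  define Y where "Y = q * c + d"
  have Yc: "cnj d + q * cnj c = Y" by (simp add: Y_def c d cnj_def of_real_def quat_eq_iff)
  have n1: "(norm (of_real dr :: quat))\<^sup>2 = dr\<^sup>2" "(norm (of_real cr :: quat))\<^sup>2 = cr\<^sup>2" by simp_all
  have i1: "inner (of_real cr :: quat) (of_real dr) = cr*dr" by (simp add: inner_quat_def)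
  have "PP c d q = of_real (dr\<^sup>2) + of_real (2*(cr*dr)) * q + of_real (cr\<^sup>2) * q\<^sup>2"
    by (simp only: PP_def c d n1 i1)
  also have "\<dots> = Y * Y"
    by (simp add: Y_def c d quat_eq_iff power2_eq_square algebra_simps)
  finally have PY: "PP c d q = Y * Y" .
  have R: "rinv (lin c d) q = inverse Y"
  proof (cases "Y = 0")
    case True then show ?thesis by (simp add: rinv_lin Yc)
  next
    case False
    then show ?thesis by (simp add: rinv_lin Yc PY nonzero_inverse_mult_distrib mult.assoc)
  qed
  have qY: "q * Y = Y * q" by (simp add: Y_def c d quat_eq_iff algebra_simps)
  have "reg_mobius a b c d q = inverse Y * b + q * inverse Y * a" using s q R by simp
  also have "\<dots> = inverse Y * (q * a + b)" by (simp add: inverse_comm[OF qY] algebra_simps)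
  also have "\<dots> = mobius a b c d q" by (simp add: mobius_def Y_def)
  finally show ?thesis .
qed



lemma cnj_scaleR: "cnj (r *\<^sub>R x) = r *\<^sub>R cnj x" by (simp add: quat_eq_iff)
lemma cnj_minus: "cnj (- x) = - cnj x" by (simp add: quat_eq_iff)
lemma cnj_of_real: "cnj (of_real r) = of_real r" by (simp add: quat_eq_iff)

lemma sub_dir:
  assumes sp: "sp11 a b c d" and sp': "sp11 a' b' c' d'"
    and eq: "restrict (mobius a b c d) qball = restrict (reg_mobius a' b' c' d') qball"
  shows "\<exists>t u. restrict (mobius a b c d) qball = restrict (\<lambda>q. inverse (1 - q * of_real t) * (q - of_real t) * u) qball
           \<and> - 1 < t \<and> t < 1 \<and> norm u = 1"
proof -
  obtain s where s: "\<forall>q\<in>qball. (\<lambda>n. q^n * s n) sums reg_mobius a' b' c' d' q \<and>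
     reg_mobius a' b' c' d' q = rinv (lin c' d') q * b' + q * rinv (lin c' d') q * a'"
    using reg_mobius_series[OF sp'] by blast
  have ser: "\<forall>q\<in>qball. (\<lambda>n. q^n * s n) sums mobius a b c d q"
  proof
    fix q :: quat assume q: "q \<in> qball"
    have "mobius a b c d q = reg_mobius a' b' c' d' q" using fun_cong[OF eq, of q] q by simp
    moreover have "(\<lambda>n. q^n * s n) sums reg_mobius a' b' c' d' q" using s q by blast
    ultimately show "(\<lambda>n. q^n * s n) sums mobius a b c d q" by simp
  qed
  define cr where "cr = Re c"
  define dr where "dr = Re d"
  have c: "c = of_real cr" and d: "d = of_real dr"
    using classical_regular_real[OF sp ser] by (simp_all add: cr_def dr_def)
  have nd: "(norm d)\<^sup>2 = (norm c)\<^sup>2 + 1" and na: "(norm a)\<^sup>2 = (norm b)\<^sup>2 + 1"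
    using sp11_norms[OF sp] by simp_all
  then have nd': "dr\<^sup>2 = cr\<^sup>2 + 1" by (simp add: c d)
  have dr0: "dr \<noteq> 0"
  proof
    assume "dr = 0"
    with nd' have "cr\<^sup>2 + 1 = 0" by simp
    then show False using zero_le_power2[of cr] by linarith
  qed
  define t where "t = - cr / dr"
  define u where "u = (1 / dr) *\<^sub>R a"
  from sp have e3: "cnj c * a + cnj d * (- b) = 0" by (simp add: sp11_def)
  then have "cr *\<^sub>R a = dr *\<^sub>R b" by (simp add: c d cnj_of_real scaleR_conv_of_real)
  then have bb: "b = (cr / dr) *\<^sub>R a"
  proof -
    assume h: "cr *\<^sub>R a = dr *\<^sub>R b"
    have "b = (1/dr) *\<^sub>R (dr *\<^sub>R b)" using dr0 by simp
    also have "\<dots> = (1/dr) *\<^sub>R (cr *\<^sub>R a)" by (simp only: h)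
    also have "\<dots> = (cr / dr) *\<^sub>R a" by simp
    finally show ?thesis .
  qed
  have au: "a = dr *\<^sub>R u" using dr0 by (simp add: u_def)
  have bu: "b = (-t*dr) *\<^sub>R u" using dr0 by (simp add: bb u_def t_def)
  have ct: "c = of_real (-t*dr)" using dr0 by (simp add: c t_def)
  have crdr: "cr\<^sup>2 < dr\<^sup>2" using nd' by simp
  have tt: "\<bar>t\<bar> < 1"
  proof -
    have "\<bar>cr\<bar>\<^sup>2 < \<bar>dr\<bar>\<^sup>2" using crdr by simp
    then have "\<bar>cr\<bar> < \<bar>dr\<bar>" by (rule power_less_imp_less_base) simp
    then show ?thesis using dr0 by (simp add: t_def abs_divide)
  qed
  have nu: "norm u = 1"
  proof -
    have nb: "(norm b)\<^sup>2 = (cr/dr)\<^sup>2 * (norm a)\<^sup>2" by (simp add: bb power_mult_distrib power_divide)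
    have A: "(norm a)\<^sup>2 = (cr/dr)\<^sup>2 * (norm a)\<^sup>2 + 1" using na nb by linarith
    have B: "(cr/dr)\<^sup>2 * (norm a)\<^sup>2 * dr\<^sup>2 = cr\<^sup>2 * (norm a)\<^sup>2" using dr0 by (simp add: power_divide)
    have "(norm a)\<^sup>2 * dr\<^sup>2 = ((cr/dr)\<^sup>2 * (norm a)\<^sup>2 + 1) * dr\<^sup>2" using A by simp
    then have "(norm a)\<^sup>2 * dr\<^sup>2 = cr\<^sup>2 * (norm a)\<^sup>2 + dr\<^sup>2" using B by (simp add: distrib_right)
    then have "(norm a)\<^sup>2 = dr\<^sup>2" using nd' by (simp add: algebra_simps)
    then have "norm a = \<bar>dr\<bar>" by (metis abs_norm_cancel power2_eq_iff_nonneg abs_ge_zero norm_ge_zero real_sqrt_abs real_sqrt_unique)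
    then show ?thesis using dr0 by (simp add: u_def)
  qed
  show ?thesis
  proof (intro exI conjI)
    show "restrict (mobius a b c d) qball = restrict (\<lambda>q. inverse (1 - q * of_real t) * (q - of_real t) * u) qball"
    proof
      fix q show "restrict (mobius a b c d) qball q = restrict (\<lambda>q. inverse (1 - q * of_real t) * (q - of_real t) * u) qball q"
        using mobius_real_form[OF dr0 tt, of q u] unfolding au bu ct d by (simp add: restrict_def)
    qed
  qed (use tt nu in auto)
qed


lemma cnj_mult_unit: "norm u = 1 \<Longrightarrow> cnj u * u = 1"
  by (simp add: cnj_mult_self)

lemma sup_dir:
  assumes t: "- 1 < t" "t < 1" and u: "norm u = 1"
  shows "\<exists>a b c d. sp11 a b c d
     \<and> restrict (\<lambda>q. inverse (1 - q * of_real t) * (q - of_real t) * u) qball = restrict (mobius a b c d) qball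
     \<and> restrict (\<lambda>q. inverse (1 - q * of_real t) * (q - of_real t) * u) qball = restrict (reg_mobius a b c d) qball"
proof -
  define k where "k = 1 / sqrt (1 - t^2)"
  have t2: "t^2 < 1" using t by (simp add: abs_square_less_1)
  have k0: "k \<noteq> 0" using t2 by (simp add: k_def)
  have kk: "k * k * (1 - t * t) = 1"
  proof -
    have "k * k = 1 / (1 - t^2)" using t2 by (simp add: k_def power2_eq_square[symmetric] power_divide)
    then show ?thesis using t2 by (simp add: power2_eq_square)
  qed
  have tt: "\<bar>t\<bar> < 1" using t by simp
  define a where "a = k *\<^sub>R u"
  define b where "b = (-t*k) *\<^sub>R u"
  define c :: quat where "c = of_real (-t*k)"
  define d :: quat where "d = of_real k"
  have cu: "cnj u * u = 1" by (rule cnj_mult_unit[OF u])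
  have sp: "sp11 a b c d"
  proof -
    have "cnj a * a + cnj b * (- b) = (k * k * (1 - t * t)) *\<^sub>R (cnj u * u)"
      by (simp add: a_def b_def cnj_scaleR cnj_minus algebra_simps)
    also have "\<dots> = 1" using kk cu by simp
    finally have 1: "cnj a * a + cnj b * (- b) = 1" .
    have 2: "cnj a * c + cnj b * (- d) = 0"
      by (simp add: a_def b_def c_def d_def quat_eq_iff algebra_simps)
    have 3: "cnj c * a + cnj d * (- b) = 0"
      by (simp add: a_def b_def c_def d_def quat_eq_iff algebra_simps)
    have "cnj c * c + cnj d * (- d) = of_real (- (k * k * (1 - t * t)))"
      by (simp add: c_def d_def quat_eq_iff algebra_simps)
    also have "\<dots> = -1" using kk by simp
    finally have 4: "cnj c * c + cnj d * (- d) = -1" .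
    show ?thesis using 1 2 3 4 by (simp add: sp11_def)
  qed
  have mob: "restrict (\<lambda>q. inverse (1 - q * of_real t) * (q - of_real t) * u) qball = restrict (mobius a b c d) qball"
  proof
    fix q show "restrict (\<lambda>q. inverse (1 - q * of_real t) * (q - of_real t) * u) qball q = restrict (mobius a b c d) qball q"
      using mobius_real_form[OF k0 tt, of q u] by (simp add: restrict_def a_def b_def c_def d_def)
  qed
  have reg: "restrict (mobius a b c d) qball = restrict (reg_mobius a b c d) qball"
  proof
    fix q show "restrict (mobius a b c d) qball q = restrict (reg_mobius a b c d) qball q"
      using reg_eq_mob_real[OF sp c_def d_def, of q] by (simp add: restrict_def)
  qed
  show ?thesis
    by (rule exI[of _ a], rule exI[of _ b], rule exI[of _ c], rule exI[of _ d]) (simp only: sp mob reg)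
qed

theorem proposition3p1:
  shows "{restrict (mobius a b c d) qball | a b c d. sp11 a b c d}
       \<inter> {restrict (reg_mobius a b c d) qball | a b c d. sp11 a b c d}
       = {restrict (\<lambda>q. inverse (1 - q * of_real t) * (q - of_real t) * u) qball
            | t u. - 1 < t \<and> t < 1 \<and> norm u = 1}"
proof (intro equalityI subsetI)
  fix X assume "X \<in> {restrict (mobius a b c d) qball | a b c d. sp11 a b c d}
       \<inter> {restrict (reg_mobius a b c d) qball | a b c d. sp11 a b c d}"
  then obtain a b c d a' b' c' d' where sp: "sp11 a b c d" and X: "X = restrict (mobius a b c d) qball"
    and sp': "sp11 a' b' c' d'" and X': "X = restrict (reg_mobius a' b' c' d') qball"
    by blast
  from sub_dir[OF sp sp'] X X' obtain t u where
    "X = restrict (\<lambda>q. inverse (1 - q * of_real t) * (q - of_real t) * u) qball" "- 1 < t" "t < 1" "norm u = 1"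
    by auto
  then show "X \<in> {restrict (\<lambda>q. inverse (1 - q * of_real t) * (q - of_real t) * u) qball
            | t u. - 1 < t \<and> t < 1 \<and> norm u = 1}" by blast
next
  fix X assume "X \<in> {restrict (\<lambda>q. inverse (1 - q * of_real t) * (q - of_real t) * u) qball
            | t u. - 1 < t \<and> t < 1 \<and> norm u = 1}"
  then obtain t u where X: "X = restrict (\<lambda>q. inverse (1 - q * of_real t) * (q - of_real t) * u) qball"
    and t: "- 1 < t" "t < 1" and u: "norm u = 1" by blast
  from sup_dir[OF t u] obtain a b c d where "sp11 a b c d" "X = restrict (mobius a b c d) qball"
    "X = restrict (reg_mobius a b c d) qball" using X by auto
  then show "X \<in> {restrict (mobius a b c d) qball | a b c d. sp11 a b c d}
       \<inter> {restrict (reg_mobius a b c d) qball | a b c d. sp11 a b c d}" by blast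
qed

end
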